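(* In the setting of $I\ge 2$ matched pairs with fixed potential outcomes, observed outcomes $Y_{ij}=Y_{ij}(Z_{ij})$, and conditional on $\mathcal F,\mathcal Z$ the within-pair assignments $\widetilde Z_{i1}$ independent across pairs with $P(\widetilde Z_{i1}=1\mid\mathcal F,\mathcal Z)=p_{i1}\in(0,1)$ and $\widetilde Z_{i2}=1-\widetilde Z_{i1}$, consider the classic (generalized) Neyman estimator $$\widehat\lambda=\frac{\sum_{i=1}^{I}(\widetilde Z_{i1}-\widetilde Z_{i2})(Y_{i1}-Y_{i2})}{\sum_{i=1}^{I}(z_i^{**}-z_i^{*})}$$ and the variance estimator $$\overline{\overline V}=\frac{1}{\big(\sum_{i=1}^{I}(z_i^{**}-z_i^{*})\big)^2}\,\frac{I}{I-1}\sum_{i=1}^{I}\Big(\widetilde Z_{i1}\big((Y_{i1}-Y_{i2})-a\big)^2+\widetilde Z_{i2}\big((Y_{i2}-Y_{i1})-a\big)^2\Big),\qquad a=\widehat\lambda\,\frac{1}{I}\sum_{i=1}^{I}(z_i^{**}-z_i^{*}).$$ Then $\mathbb E[\overline{\overline V}\mid\mathcal F,\mathcal Z]\ge \mathrm{Var}[\widehat\lambda\mid\mathcal F,\mathcal Z]$.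
   Context: $Z_{ij}$ is the observed treatment dose of individual $j$ in matched pair $i$; $z_i^{*}=Z_{i1}\wedge Z_{i2}<z_i^{**}=Z_{i1}\vee Z_{i2}$; $\widetilde Z_{ij}=\mathbf 1\{Z_{ij}=z_i^{**}\}$. $\mathcal Z$ is the set of the $2^I$ dose assignments obtained by permuting the two doses within each pair, and $\mathcal F=\{(Y_{ij}(z_i^* ),Y_{ij}(z_i^{**}),\mathbf{x}_{ij})\}$ collects the potential outcomes under the two paired doses and the covariates. Expectation and variance are over the randomization distribution of the within-pair assignments only. *)

theory Defs
  imports "HOL-Probability.Probability"
begin

text \<open>Pairs are indexed by i in {1..I}, units within a pair by j in {1,2}.
  zlo i = z_i^*, zhi i = z_i^**, Y i j z = potential outcome Y_ij(z).
  An assignment w :: nat => bool records w i = (Ztilde_i1 = 1), i.e. unit 1 of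
  pair i receives the larger dose zhi i and unit 2 the smaller dose zlo i.\<close>

definition dose :: "(nat \<Rightarrow> real) \<Rightarrow> (nat \<Rightarrow> real) \<Rightarrow> (nat \<Rightarrow> bool) \<Rightarrow> nat \<Rightarrow> nat \<Rightarrow> real" where
  "dose zlo zhi w i j = (if (w i \<longleftrightarrow> j = 1) then zhi i else zlo i)"

definition Ztil :: "(nat \<Rightarrow> real) \<Rightarrow> (nat \<Rightarrow> real) \<Rightarrow> (nat \<Rightarrow> bool) \<Rightarrow> nat \<Rightarrow> nat \<Rightarrow> real" where
  "Ztil zlo zhi w i j = (if dose zlo zhi w i j = zhi i then 1 else 0)"

definition Yobs :: "(nat \<Rightarrow> nat \<Rightarrow> real \<Rightarrow> real) \<Rightarrow> (nat \<Rightarrow> real) \<Rightarrow> (nat \<Rightarrow> real) \<Rightarrow> (nat \<Rightarrow> bool) \<Rightarrow> nat \<Rightarrow> nat \<Rightarrow> real" where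
  "Yobs Y zlo zhi w i j = Y i j (dose zlo zhi w i j)"

definition lambda_hat :: "nat \<Rightarrow> (nat \<Rightarrow> nat \<Rightarrow> real \<Rightarrow> real) \<Rightarrow> (nat \<Rightarrow> real) \<Rightarrow> (nat \<Rightarrow> real) \<Rightarrow> (nat \<Rightarrow> bool) \<Rightarrow> real" where
  "lambda_hat I Y zlo zhi w =
     (\<Sum>i=1..I. (Ztil zlo zhi w i 1 - Ztil zlo zhi w i 2) * (Yobs Y zlo zhi w i 1 - Yobs Y zlo zhi w i 2))
     / (\<Sum>i=1..I. zhi i - zlo i)"

definition Vbar :: "nat \<Rightarrow> (nat \<Rightarrow> nat \<Rightarrow> real \<Rightarrow> real) \<Rightarrow> (nat \<Rightarrow> real) \<Rightarrow> (nat \<Rightarrow> real) \<Rightarrow> (nat \<Rightarrow> bool) \<Rightarrow> real" where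
  "Vbar I Y zlo zhi w =
     (let D = (\<Sum>i=1..I. zhi i - zlo i);
          a = lambda_hat I Y zlo zhi w * (1 / real I) * D
      in 1 / D^2 * (real I / (real I - 1)) *
         (\<Sum>i=1..I. Ztil zlo zhi w i 1 * ((Yobs Y zlo zhi w i 1 - Yobs Y zlo zhi w i 2) - a)^2
                   + Ztil zlo zhi w i 2 * ((Yobs Y zlo zhi w i 2 - Yobs Y zlo zhi w i 1) - a)^2))"

definition assign_pmf :: "nat \<Rightarrow> (nat \<Rightarrow> real) \<Rightarrow> (nat \<Rightarrow> bool) pmf" where
  "assign_pmf I p = Pi_pmf {1..I} False (\<lambda>i. bernoulli_pmf (p i))"

end

theory Submission
  imports Defs
begin

lemma fin_assign: "finite (set_pmf (assign_pmf I p))"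
  unfolding assign_pmf_def by (subst set_Pi_pmf) auto

lemma int_assign: "integrable (measure_pmf (assign_pmf I p)) (f :: _ \<Rightarrow> real)"
  by (rule integrable_measure_pmf_finite[OF fin_assign])

lemma EXX:
  assumes "i \<in> {1..I}" "j \<in> {1..I}" and hp: "\<And>i. i \<in> {1..I} \<Longrightarrow> 0 \<le> p i \<and> p i \<le> 1"
  shows "measure_pmf.expectation (assign_pmf I p) (\<lambda>w. of_bool (w i) * of_bool (w j))
         = (if i = j then p i else p i * p j)"
proof -
  let ?f = "\<lambda>x (v::bool). if x \<in> {i,j} then (of_bool v::real) else 1"
  have pw: "(\<lambda>w. of_bool (w i) * of_bool (w j)) = (\<lambda>w. \<Prod>x\<in>{1..I}. ?f x (w x))"
  proof
    fix w :: "nat \<Rightarrow> bool"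
    have "(\<Prod>x\<in>{1..I}. ?f x (w x)) = (\<Prod>x\<in>{1..I} \<inter> {i,j}. of_bool (w x))"
      by (subst prod.inter_restrict) auto
    also have "{1..I} \<inter> {i,j} = {i,j}" using assms by auto
    finally show "(of_bool (w i) * of_bool (w j) :: real) = (\<Prod>x\<in>{1..I}. ?f x (w x))"
      by (cases "i = j") auto
  qed
  have "measure_pmf.expectation (assign_pmf I p) (\<lambda>w. \<Prod>x\<in>{1..I}. ?f x (w x))
        = (\<Prod>x\<in>{1..I}. measure_pmf.expectation (bernoulli_pmf (p x)) (?f x))"
    unfolding assign_pmf_def
    by (rule expectation_prod_Pi_pmf) (auto intro: integrable_measure_pmf_finite)
  also have "\<dots> = (\<Prod>x\<in>{1..I}. if x \<in> {i,j} then p x else 1)"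
    using hp by (intro prod.cong) auto
  also have "\<dots> = (\<Prod>x\<in>{1..I} \<inter> {i,j}. p x)"
    by (subst prod.inter_restrict) auto
  also have "{1..I} \<inter> {i,j} = {i,j}" using assms by auto
  finally show ?thesis using pw by (cases "i = j") auto
qed

lemma EX1:
  assumes "i \<in> {1..I}" and hp: "\<And>i. i \<in> {1..I} \<Longrightarrow> 0 \<le> p i \<and> p i \<le> 1"
  shows "measure_pmf.expectation (assign_pmf I p) (\<lambda>w. of_bool (w i)) = p i"
  proof -
  have e: "(\<lambda>w. of_bool (w i) * of_bool (w i) :: real) = (\<lambda>w. of_bool (w i))" by auto
  show ?thesis using EXX[where i=i and j=i and I=I and p=p, OF assms(1) assms(1)] hp unfolding e by simp
qed

lemma ETT:
  assumes "i \<in> {1..I}" "j \<in> {1..I}" and hp: "\<And>i. i \<in> {1..I} \<Longrightarrow> 0 \<le> p i \<and> p i \<le> 1"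
  shows "measure_pmf.expectation (assign_pmf I p)
           (\<lambda>w. (ba + ca * of_bool (w i)) * (bb + cb * of_bool (w j)))
         = (ba + ca * p i) * (bb + cb * p j) + (if i = j then ca * cb * (p i - p i * p i) else 0)"
proof -
  have eq: "(\<lambda>w. (ba + ca * of_bool (w i)) * (bb + cb * of_bool (w j)))
      = (\<lambda>w. ba*bb + ((ba*cb) * of_bool (w j) + ((ca*bb) * of_bool (w i)
             + (ca*cb) * (of_bool (w i) * of_bool (w j)))))"
    by (rule ext) (simp add: algebra_simps)
  have e1: "measure_pmf.expectation (assign_pmf I p) (\<lambda>w. of_bool (w i)) = p i"
    by (rule EX1) (use assms in auto)
  have e2: "measure_pmf.expectation (assign_pmf I p) (\<lambda>w. of_bool (w j)) = p j"
    by (rule EX1) (use assms in auto)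
  have e3: "measure_pmf.expectation (assign_pmf I p) (\<lambda>w. of_bool (w i) * of_bool (w j))
         = (if i = j then p i else p i * p j)"
    by (rule EXX) (use assms in auto)
  show ?thesis
    unfolding eq
    using e1 e2 e3
    by (cases "i = j"; simp add: Bochner_Integration.integral_add int_assign algebra_simps)
qed

lemma cs_sum:
  fixes mu :: "nat \<Rightarrow> real"
  assumes "finite A"
  shows "(\<Sum>i\<in>A. mu i)^2 \<le> real (card A) * (\<Sum>i\<in>A. (mu i)^2)"
proof -
  have "0 \<le> (\<Sum>i\<in>A. \<Sum>j\<in>A. (mu i - mu j)^2)"
    by (intro sum_nonneg) auto
  also have "\<dots> = (\<Sum>i\<in>A. \<Sum>j\<in>A. (mu i)^2 + (mu j)^2 - 2 * (mu i * mu j))"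
    by (simp add: power2_diff algebra_simps)
  also have "\<dots> = 2 * (real (card A) * (\<Sum>i\<in>A. (mu i)^2)) - 2 * (\<Sum>i\<in>A. mu i)^2"
    by (simp add: sum_subtractf sum.distrib sum_distrib_left sum_distrib_right power2_eq_square
          sum_product algebra_simps)
  finally show ?thesis by simp
qed

theorem lemma1:
  fixes I :: nat and Y :: "nat \<Rightarrow> nat \<Rightarrow> real \<Rightarrow> real"
    and zlo zhi p :: "nat \<Rightarrow> real"
  assumes "I \<ge> 2"
    and "\<And>i. i \<in> {1..I} \<Longrightarrow> zlo i < zhi i"
    and "\<And>i. i \<in> {1..I} \<Longrightarrow> 0 < p i \<and> p i < 1"
  shows "measure_pmf.expectation (assign_pmf I p) (Vbar I Y zlo zhi)
           \<ge> measure_pmf.variance (assign_pmf I p) (lambda_hat I Y zlo zhi)"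
proof -
  define M where "M = assign_pmf I p"
  define D where "D = (\<Sum>i=1..I. zhi i - zlo i)"
  define B where "B i = Y i 2 (zhi i) - Y i 1 (zlo i)" for i
  define C where "C i = (Y i 1 (zhi i) - Y i 2 (zlo i)) - B i" for i
  define T where "T w i = B i + C i * of_bool (w i)" for w :: "nat \<Rightarrow> bool" and i
  define S where "S w = (\<Sum>i=1..I. T w i)" for w
  define mu where "mu i = B i + C i * p i" for i
  define v where "v i = C i * C i * (p i - p i * p i)" for i
  have hp: "\<And>i. i \<in> {1..I} \<Longrightarrow> 0 \<le> p i \<and> p i \<le> 1" using assms(3) by force
  have Dpos: "D > 0" unfolding D_def using assms(1,2)
    by (intro sum_pos) auto
  have cardI: "card {1..I} = I" by simp
  have lam: "lambda_hat I Y zlo zhi w = S w / D" for w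
  proof -
    have "(Ztil zlo zhi w i 1 - Ztil zlo zhi w i 2) * (Yobs Y zlo zhi w i 1 - Yobs Y zlo zhi w i 2) = T w i"
      if "i \<in> {1..I}" for i
      using assms(2)[OF that]
      by (cases "w i") (auto simp: Ztil_def Yobs_def dose_def T_def B_def C_def)
    then show ?thesis unfolding lambda_hat_def S_def D_def by simp
  qed
  have vb: "Vbar I Y zlo zhi w = 1 / D^2 * (real I / (real I - 1)) * (\<Sum>i=1..I. (T w i - S w / real I)^2)"
    for w
  proof -
    have a: "lambda_hat I Y zlo zhi w * (1 / real I) * D = S w / real I"
      using Dpos unfolding lam by simp
    have "Ztil zlo zhi w i 1 * ((Yobs Y zlo zhi w i 1 - Yobs Y zlo zhi w i 2) - S w / real I)^2
         + Ztil zlo zhi w i 2 * ((Yobs Y zlo zhi w i 2 - Yobs Y zlo zhi w i 1) - S w / real I)^2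
         = (T w i - S w / real I)^2"
      if "i \<in> {1..I}" for i
      using assms(2)[OF that]
      by (cases "w i") (auto simp: Ztil_def Yobs_def dose_def T_def B_def C_def)
    then show ?thesis unfolding Vbar_def Let_def D_def[symmetric] a by simp
  qed
  have sq: "(\<Sum>i=1..I. (T w i - S w / real I)^2) = (\<Sum>i=1..I. (T w i)^2) - (S w)^2 / real I" for w
  proof -
    have "(\<Sum>i=1..I. (T w i - S w / real I)^2)
        = (\<Sum>i=1..I. (T w i)^2) - 2 * (S w / real I) * S w + real I * (S w / real I)^2"
      by (simp add: power2_diff sum_subtractf sum.distrib sum_distrib_left sum_divide_distrib S_def algebra_simps)
    also have "\<dots> = (\<Sum>i=1..I. (T w i)^2) - (S w)^2 / real I"
      using assms(1) by (simp add: power2_eq_square field_simps)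
    finally show ?thesis .
  qed
  have ETT': "measure_pmf.expectation M (\<lambda>w. T w i * T w j) = mu i * mu j + (if i = j then v i else 0)"
    if "i \<in> {1..I}" "j \<in> {1..I}" for i j
  proof -
    have "measure_pmf.expectation M (\<lambda>w. T w i * T w j) = (B i + C i*p i)*(B j + C j*p j)
       + (if i=j then C i*C j*(p i - p i*p i) else 0)"
      unfolding M_def T_def
      by (rule ETT[where I=I and p=p and i=i and j=j and ba="B i" and ca="C i" and bb="B j" and cb="C j"])
         (use that hp in auto)
    then show ?thesis by (simp add: mu_def v_def)
  qed
  have ES2: "measure_pmf.expectation M (\<lambda>w. (S w)^2) = (\<Sum>i=1..I. mu i)^2 + (\<Sum>i=1..I. v i)"
  proof -
    have "(\<lambda>w. (S w)^2) = (\<lambda>w. \<Sum>i=1..I. \<Sum>j=1..I. T w i * T w j)"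
      by (rule ext) (simp add: S_def power2_eq_square sum_product)
    then have "measure_pmf.expectation M (\<lambda>w. (S w)^2)
        = (\<Sum>i=1..I. \<Sum>j=1..I. measure_pmf.expectation M (\<lambda>w. T w i * T w j))"
      by (simp add: Bochner_Integration.integral_sum M_def int_assign)
    also have "\<dots> = (\<Sum>i=1..I. \<Sum>j=1..I. mu i * mu j + (if i = j then v i else 0))"
      using ETT' by simp
    also have "\<dots> = (\<Sum>i=1..I. mu i)^2 + (\<Sum>i=1..I. v i)"
      by (simp add: sum.distrib power2_eq_square sum_product sum.delta sum.delta')
    finally show ?thesis .
  qed
  have ET2: "measure_pmf.expectation M (\<lambda>w. \<Sum>i=1..I. (T w i)^2) = (\<Sum>i=1..I. (mu i)^2 + v i)"
  proof -
    have "measure_pmf.expectation M (\<lambda>w. \<Sum>i=1..I. (T w i)^2)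
        = (\<Sum>i=1..I. measure_pmf.expectation M (\<lambda>w. T w i * T w i))"
      by (simp add: Bochner_Integration.integral_sum M_def int_assign power2_eq_square)
    also have "\<dots> = (\<Sum>i=1..I. (mu i)^2 + v i)"
      using ETT' by (simp add: power2_eq_square)
    finally show ?thesis .
  qed
  have ES: "measure_pmf.expectation M S = (\<Sum>i=1..I. mu i)"
  proof -
    have "measure_pmf.expectation M S = (\<Sum>i=1..I. measure_pmf.expectation M (\<lambda>w. T w i))"
      unfolding S_def by (simp add: Bochner_Integration.integral_sum M_def int_assign)
    also have "\<dots> = (\<Sum>i=1..I. mu i)"
    proof (rule sum.cong)
      fix i assume i: "i \<in> {1..I}"
      have "measure_pmf.expectation M (\<lambda>w. T w i) = measure_pmf.expectation M (\<lambda>w. (B i + C i * of_bool (w i)) * (1 + 0 * of_bool (w i)))"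
        by (simp add: T_def)
      also have "\<dots> = mu i" unfolding M_def mu_def
        by (subst ETT[where I=I and p=p and i=i and j=i and ba="B i" and ca="C i" and bb=1 and cb=0])
           (use i hp in auto)
      finally show "measure_pmf.expectation M (\<lambda>w. T w i) = mu i" .
    qed simp
    finally show ?thesis .
  qed
  define R where "R = (\<Sum>i=1..I. (mu i)^2)"
  define V where "V = (\<Sum>i=1..I. v i)"
  define Mu where "Mu = (\<Sum>i=1..I. mu i)"
  have cs: "Mu^2 \<le> real I * R" unfolding Mu_def R_def using cs_sum[of "{1..I}" mu] by simp
  have EV: "measure_pmf.expectation M (Vbar I Y zlo zhi)
      = 1 / D^2 * (real I / (real I - 1)) * ((R + V) - (Mu^2 + V) / real I)"
  proof -
    have "measure_pmf.expectation M (Vbar I Y zlo zhi)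
      = measure_pmf.expectation M (\<lambda>w. 1 / D^2 * (real I / (real I - 1)) *
          ((\<Sum>i=1..I. (T w i)^2) - (S w)^2 / real I))"
      unfolding vb sq by simp
    also have "\<dots> = 1 / D^2 * (real I / (real I - 1)) *
          (measure_pmf.expectation M (\<lambda>w. \<Sum>i=1..I. (T w i)^2) -
           measure_pmf.expectation M (\<lambda>w. (S w)^2) / real I)"
      by (simp add: M_def int_assign Bochner_Integration.integral_diff)
    also have "\<dots> = 1 / D^2 * (real I / (real I - 1)) * ((R + V) - (Mu^2 + V) / real I)"
      unfolding ET2 ES2 R_def V_def Mu_def by (simp add: sum.distrib)
    finally show ?thesis .
  qed
  have VL: "measure_pmf.variance M (lambda_hat I Y zlo zhi) = V / D^2"
  proof -
    have l: "lambda_hat I Y zlo zhi = (\<lambda>w. S w / D)" using lam by auto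
    have "measure_pmf.variance M (lambda_hat I Y zlo zhi)
        = measure_pmf.expectation M (\<lambda>w. (S w / D)^2) - (measure_pmf.expectation M (\<lambda>w. S w / D))^2"
      unfolding l by (rule measure_pmf.variance_eq) (simp_all add: M_def int_assign)
    also have "\<dots> = (Mu^2 + V) / D^2 - (Mu / D)^2"
      using ES2 ES by (simp add: power_divide Mu_def V_def)
    also have "\<dots> = V / D^2" by (simp add: power_divide add_divide_distrib)
    finally show ?thesis .
  qed
  have key: "V \<le> (real I / (real I - 1)) * ((R + V) - (Mu^2 + V) / real I)"
  proof -
    have I1: "real I - 1 > 0" using assms(1) by simp
    have "(real I / (real I - 1)) * ((R + V) - (Mu^2 + V) / real I)
        = (real I * R - Mu^2 + (real I - 1) * V) / (real I - 1)"
      using I1 assms(1) by (simp add: field_simps)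
    also have "\<dots> \<ge> ((real I - 1) * V) / (real I - 1)"
      using cs I1 by (intro divide_right_mono) auto
    finally show ?thesis using I1 by simp
  qed
  have "V / D^2 \<le> 1 / D^2 * ((real I / (real I - 1)) * ((R + V) - (Mu^2 + V) / real I))"
  proof -
    have "V / D^2 \<le> ((real I / (real I - 1)) * ((R + V) - (Mu^2 + V) / real I)) / D^2"
      by (rule divide_right_mono[OF key]) simp
    then show ?thesis by (simp add: mult.commute)
  qed
  then show ?thesis using EV VL unfolding M_def by (simp add: mult.assoc)
qed

end
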